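(* Let $M\subset\mathbb{R}^2$ be a connected, simply connected open set and let $X:M\to\mathbb{R}^4_1$ be a minimal spacelike graph of first type $X(x,y)=(A(x,y),x,y,B(x,y))$ or of second type $X(x,y)=(x,A(x,y),B(x,y),y)$, with coefficients $E,F,G$ and $W=\sqrt{EG-F^2}$. Fix $z_0\in M$. Then the functions $$u(x,y)=x+\int_{z_0}^{(x,y)}\frac{E\,dx+F\,dy}{W},\qquad v(x,y)=y+\int_{z_0}^{(x,y)}\frac{F\,dx+G\,dy}{W}$$ are well defined on $M$ and satisfy the generalized Cauchy–Riemann equations $$u_y=\frac FE u_x-\frac WE v_x,\qquad v_y=\frac WE u_x+\frac FE v_x,$$ so that $(u,v)$ provide isothermic parameters for $X(M)$.
   Context: $\mathbb{R}^4_1$: $\mathbb{R}^4$ with $\langle (a_0,\dots,a_3),(b_0,\dots,b_3)\rangle=-a_0b_0+a_1b_1+a_2b_2+a_3b_3$. $E=\langle X_x,X_x\rangle$, $F=\langle X_x,X_y\rangle$, $G=\langle X_y,X_y\rangle$. $A,B$ are smooth real functions. Minimal means vanishing mean curvature vector. Isothermic parameters $(u,v)$: the induced metric is $\lambda^2(du^2+dv^2)$. *)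

theory Defs
  imports "HOL-Analysis.Analysis"
begin

text \<open>Points of the parameter domain are pairs (x,y) :: real \<times> real.
  Minkowski space R^4_1 is modelled as real^4 with the Lorentzian product below.\<close>

definition lip :: "real^4 \<Rightarrow> real^4 \<Rightarrow> real" where
  "lip a b = - (a$1 * b$1) + a$2 * b$2 + a$3 * b$3 + a$4 * b$4"

definition mk4 :: "real \<Rightarrow> real \<Rightarrow> real \<Rightarrow> real \<Rightarrow> real^4" where
  "mk4 a b c d = (\<chi> i. if i = 1 then a else if i = 2 then b else if i = 3 then c else d)"

definition px :: "(real \<times> real \<Rightarrow> 'b::real_normed_vector) \<Rightarrow> real \<times> real \<Rightarrow> 'b" where
  "px f p = vector_derivative (\<lambda>t. f (t, snd p)) (at (fst p))"

definition py :: "(real \<times> real \<Rightarrow> 'b::real_normed_vector) \<Rightarrow> real \<times> real \<Rightarrow> 'b" where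
  "py f p = vector_derivative (\<lambda>t. f (fst p, t)) (at (snd p))"

fun Ck_on :: "nat \<Rightarrow> (real \<times> real) set \<Rightarrow> (real \<times> real \<Rightarrow> real) \<Rightarrow> bool" where
  "Ck_on 0 M f = continuous_on M f"
| "Ck_on (Suc k) M f = (continuous_on M f \<and> f differentiable_on M \<and>
      Ck_on k M (px f) \<and> Ck_on k M (py f))"

definition smooth_on :: "(real \<times> real) set \<Rightarrow> (real \<times> real \<Rightarrow> real) \<Rightarrow> bool" where
  "smooth_on M f = (\<forall>k. Ck_on k M f)"

definition graph1 :: "(real \<times> real \<Rightarrow> real) \<Rightarrow> (real \<times> real \<Rightarrow> real) \<Rightarrow> real \<times> real \<Rightarrow> real^4" where
  "graph1 A B p = mk4 (A p) (fst p) (snd p) (B p)"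

definition graph2 :: "(real \<times> real \<Rightarrow> real) \<Rightarrow> (real \<times> real \<Rightarrow> real) \<Rightarrow> real \<times> real \<Rightarrow> real^4" where
  "graph2 A B p = mk4 (fst p) (A p) (B p) (snd p)"

definition EE :: "(real \<times> real \<Rightarrow> real^4) \<Rightarrow> real \<times> real \<Rightarrow> real" where
  "EE X p = lip (px X p) (px X p)"
definition FF :: "(real \<times> real \<Rightarrow> real^4) \<Rightarrow> real \<times> real \<Rightarrow> real" where
  "FF X p = lip (px X p) (py X p)"
definition GG :: "(real \<times> real \<Rightarrow> real^4) \<Rightarrow> real \<times> real \<Rightarrow> real" where
  "GG X p = lip (py X p) (py X p)"
definition WW :: "(real \<times> real \<Rightarrow> real^4) \<Rightarrow> real \<times> real \<Rightarrow> real" where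
  "WW X p = sqrt (EE X p * GG X p - (FF X p)\<^sup>2)"

definition spacelike_on :: "(real \<times> real) set \<Rightarrow> (real \<times> real \<Rightarrow> real^4) \<Rightarrow> bool" where
  "spacelike_on M X = (\<forall>p\<in>M. EE X p > 0 \<and> EE X p * GG X p - (FF X p)\<^sup>2 > 0)"

text \<open>Normal component of a vector w at p (orthogonal projection w.r.t. the
  Lorentzian product onto the normal space of the spacelike tangent plane).\<close>
definition nproj :: "(real \<times> real \<Rightarrow> real^4) \<Rightarrow> real \<times> real \<Rightarrow> real^4 \<Rightarrow> real^4" where
  "nproj X p w = (let E = EE X p; F = FF X p; G = GG X p; D = E * G - F\<^sup>2;
      a = (G * lip w (px X p) - F * lip w (py X p)) / D;
      b = (E * lip w (py X p) - F * lip w (px X p)) / D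
    in w - a *\<^sub>R px X p - b *\<^sub>R py X p)"

text \<open>Mean curvature vector H = (1/2) g^{ij} (X_ij)^normal.\<close>
definition mean_curv :: "(real \<times> real \<Rightarrow> real^4) \<Rightarrow> real \<times> real \<Rightarrow> real^4" where
  "mean_curv X p = (let E = EE X p; F = FF X p; G = GG X p; D = E * G - F\<^sup>2
    in (1 / (2 * D)) *\<^sub>R (G *\<^sub>R nproj X p (px (px X) p)
        - (2 * F) *\<^sub>R nproj X p (py (px X) p) + E *\<^sub>R nproj X p (py (py X) p)))"

definition minimal_on :: "(real \<times> real) set \<Rightarrow> (real \<times> real \<Rightarrow> real^4) \<Rightarrow> bool" where
  "minimal_on M X = (\<forall>p\<in>M. mean_curv X p = 0)"

end

theory Submission
  imports Defs "HOL-Complex_Analysis.Complex_Analysis"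
begin


lemma radial_poincare:
  fixes F \<alpha> \<beta> :: "complex \<Rightarrow> complex" and S :: "complex set"
  assumes S: "open S" and star: "\<And>w t. w \<in> S \<Longrightarrow> t \<in> {0..1} \<Longrightarrow> t *\<^sub>R w \<in> S"
    and deriv: "\<And>w. w \<in> S \<Longrightarrow> (F has_derivative (\<lambda>k. \<alpha> w * k + \<beta> w * cnj k)) (at w)"
    and ca: "continuous_on S \<alpha>" and cb: "continuous_on S \<beta>"
    and real: "\<And>w. w \<in> S \<Longrightarrow> Im (\<beta> w) = 0"
  shows "\<exists>\<Psi>. \<forall>w\<in>S. (\<Psi> has_derivative (\<lambda>k. Re (F w * k))) (at w)"
proof -
  define C where "C x t = t *\<^sub>R (\<alpha> (t *\<^sub>R x) * x + \<beta> (t *\<^sub>R x) * cnj x) + F (t *\<^sub>R x)" for x t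
  have cF: "continuous_on S F"
    using deriv by (meson continuous_at_imp_continuous_on has_derivative_continuous)
  show ?thesis
  proof (intro exI ballI)
    fix w assume w: "w \<in> S"
    obtain r where r: "r > 0" "ball w r \<subseteq> S" using S w open_contains_ball by blast
    define U where "U = ball w r"
    have tU: "t *\<^sub>R x \<in> S" if "x \<in> U" "t \<in> cbox 0 1" for x and t :: real
      using star that r by (auto simp: U_def)
    have lb: "((\<lambda>x. integral (cbox 0 1) (\<lambda>t. Re (F (t *\<^sub>R x) * x))) has_derivative
          blinfun_apply (integral (cbox 0 1) (\<lambda>t. blinfun_inner_left (cnj (C w t))))) (at w within U)"
    proof (rule leibniz_rule)
      fix x and t :: real assume x: "x \<in> U" and t: "t \<in> cbox 0 1"
      have d1: "((\<lambda>x. F (t *\<^sub>R x)) has_derivative (\<lambda>k. \<alpha> (t *\<^sub>R x) * (t *\<^sub>R k) + \<beta> (t *\<^sub>R x) * cnj (t *\<^sub>R k))) (at x within U)"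
      proof -
        have l: "((\<lambda>x. t *\<^sub>R x) has_derivative (\<lambda>k. t *\<^sub>R k)) (at x within U)"
          by (auto intro!: derivative_eq_intros)
        show ?thesis using has_derivative_compose[OF l deriv[OF tU[OF x t]]] by simp
      qed
      show "((\<lambda>x. Re (F (t *\<^sub>R x) * x)) has_derivative blinfun_apply (blinfun_inner_left (cnj (C x t)))) (at x within U)"
        apply (rule has_derivative_eq_rhs)
         apply (rule derivative_eq_intros d1 | simp)+
        using real[OF tU[OF x t]]
        apply (simp add: fun_eq_iff C_def inner_complex_def algebra_simps)
        done
    next
      fix x assume "x \<in> U"
      show "(\<lambda>t. Re (F (t *\<^sub>R x) * x)) integrable_on cbox 0 1"
        apply (rule integrable_continuous)
        apply (intro continuous_intros continuous_on_compose2[OF cF])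
        using tU[OF \<open>x \<in> U\<close>] by auto
    next
      have sub: "(\<lambda>(x, t). t *\<^sub>R x) ` (U \<times> cbox 0 1) \<subseteq> S" using tU by auto
      have c1: "continuous_on (U \<times> cbox 0 1) (\<lambda>(x::complex, t::real). t *\<^sub>R x)"
        unfolding split_beta by (intro continuous_intros)
      have ca': "continuous_on (U \<times> cbox 0 1) (\<lambda>(x, t). \<alpha> (t *\<^sub>R x))"
        using continuous_on_compose2[OF ca c1 sub] by (simp add: split_beta)
      have cb': "continuous_on (U \<times> cbox 0 1) (\<lambda>(x, t). \<beta> (t *\<^sub>R x))"
        using continuous_on_compose2[OF cb c1 sub] by (simp add: split_beta)
      have cF': "continuous_on (U \<times> cbox 0 1) (\<lambda>(x, t). F (t *\<^sub>R x))"
        using continuous_on_compose2[OF cF c1 sub] by (simp add: split_beta)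
      show "continuous_on (U \<times> cbox 0 1) (\<lambda>(x, t). blinfun_inner_left (cnj (C x t)))"
        unfolding C_def using ca' cb' cF'
        by (auto simp: split_beta intro!: continuous_intros)
    qed (auto simp: U_def r)
    have ftc: "(C w has_integral (1 *\<^sub>R F (1 *\<^sub>R w) - 0 *\<^sub>R F (0 *\<^sub>R w))) {0..1}"
    proof (rule fundamental_theorem_of_calculus)
      fix t :: real assume t: "t \<in> {0..1}"
      have tw: "t *\<^sub>R w \<in> S" using star w t by auto
      have l: "((\<lambda>t. t *\<^sub>R w) has_derivative (\<lambda>s. s *\<^sub>R w)) (at t within {0..1})"
        by (auto intro!: derivative_eq_intros)
      have d: "((\<lambda>t. F (t *\<^sub>R w)) has_derivative (\<lambda>s. \<alpha> (t *\<^sub>R w) * (s *\<^sub>R w) + \<beta> (t *\<^sub>R w) * cnj (s *\<^sub>R w))) (at t within {0..1})"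
        using has_derivative_compose[OF l deriv[OF tw]] by simp
      show "((\<lambda>t. t *\<^sub>R F (t *\<^sub>R w)) has_vector_derivative C w t) (at t within {0..1})"
        unfolding has_vector_derivative_def
        apply (rule has_derivative_eq_rhs)
         apply (rule derivative_eq_intros d | simp)+
        apply (simp add: fun_eq_iff C_def algebra_simps scaleR_conv_of_real)
        done
    qed simp
    have hi: "((\<lambda>t. k \<bullet> cnj (C w t)) has_integral k \<bullet> cnj (F w)) {0..1}" for k
      using has_integral_linear[OF ftc, of "\<lambda>c. k \<bullet> cnj c"]
      by (simp add: o_def bounded_linear_inner_right_comp bounded_linear_cnj)
    have intg: "(\<lambda>t. blinfun_inner_left (cnj (C w t))) integrable_on cbox 0 1"
    proof (rule integrable_continuous)
      have sub: "(\<lambda>t. t *\<^sub>R w) ` cbox 0 1 \<subseteq> S" using star w by auto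
      have c1: "continuous_on (cbox 0 1) (\<lambda>t::real. t *\<^sub>R w)" by (intro continuous_intros)
      show "continuous_on (cbox 0 1) (\<lambda>t. blinfun_inner_left (cnj (C w t)))"
        unfolding C_def
        using continuous_on_compose2[OF ca c1 sub] continuous_on_compose2[OF cb c1 sub]
          continuous_on_compose2[OF cF c1 sub]
        by (auto intro!: continuous_intros)
    qed
    have "((\<lambda>x. integral (cbox 0 1) (\<lambda>t. Re (F (t *\<^sub>R x) * x))) has_derivative (\<lambda>k. Re (F w * k))) (at w)"
      using lb unfolding U_def at_within_open[OF centre_in_ball[THEN iffD2, OF r(1)] open_ball]
      apply (rule has_derivative_eq_rhs)
    proof (rule ext)
      fix k
      have "blinfun_apply (integral (cbox 0 1) (\<lambda>t. blinfun_inner_left (cnj (C w t)))) k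
          = integral (cbox 0 1) (\<lambda>t. k \<bullet> cnj (C w t))"
        by (simp only: blinfun_apply_integral[OF intg] blinfun_inner_left.rep_eq)
      also have "\<dots> = k \<bullet> cnj (F w)" using integral_unique[OF hi[of k]] by simp
      finally show "blinfun_apply (integral (cbox 0 1) (\<lambda>t. blinfun_inner_left (cnj (C w t)))) k = Re (F w * k)"
        by (simp add: inner_complex_def)
    qed
    then show "((\<lambda>x. integral {0..1} (\<lambda>t. Re (F (t *\<^sub>R x) * x))) has_derivative (\<lambda>k. Re (F w * k))) (at w)"
      by simp
  qed
qed


lemma pullback_poincare:
  fixes f af bf g \<phi> :: "complex \<Rightarrow> complex" and S M :: "complex set"
  assumes M: "open M" and S: "open S" and star: "\<And>w t. w \<in> S \<Longrightarrow> t \<in> {0..1} \<Longrightarrow> t *\<^sub>R w \<in> S"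
    and df: "\<And>z. z \<in> M \<Longrightarrow> (f has_derivative (\<lambda>h. af z * h + bf z * cnj h)) (at z)"
    and caf: "continuous_on M af" and cbf: "continuous_on M bf"
    and real: "\<And>z. z \<in> M \<Longrightarrow> Im (bf z) = 0"
    and g: "g holomorphic_on S" and gS: "g ` S \<subseteq> M"
    and ph: "\<phi> holomorphic_on M" and phM: "\<phi> ` M \<subseteq> S" and gph: "\<And>z. z \<in> M \<Longrightarrow> g (\<phi> z) = z"
  shows "\<exists>\<Phi>. \<forall>z\<in>M. (\<Phi> has_derivative (\<lambda>h. Re (f z * h))) (at z)"
proof -
  define g' where "g' = deriv g"
  define g'' where "g'' = deriv g'"
  have hg': "g' holomorphic_on S" unfolding g'_def using g S by (rule holomorphic_deriv)
  have hg'': "g'' holomorphic_on S" unfolding g''_def using hg' S by (rule holomorphic_deriv)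
  have cf: "continuous_on M f"
    using df by (meson continuous_at_imp_continuous_on has_derivative_continuous)
  have cg: "continuous_on S g" using g holomorphic_on_imp_continuous_on by blast
  define F where "F w = f (g w) * g' w" for w
  define \<alpha> where "\<alpha> w = af (g w) * (g' w)\<^sup>2 + f (g w) * g'' w" for w
  define \<beta> where "\<beta> w = bf (g w) * (cnj (g' w) * g' w)" for w
  have "\<exists>\<Psi>. \<forall>w\<in>S. (\<Psi> has_derivative (\<lambda>k. Re (F w * k))) (at w)"
  proof (rule radial_poincare[OF S star, of _ \<alpha> \<beta>])
    fix w assume w: "w \<in> S"
    have dg: "(g has_derivative (\<lambda>k. g' w * k)) (at w)"
      using holomorphic_derivI[OF g S w, of UNIV] unfolding g'_def has_field_derivative_def
      by simp
    have dg': "(g' has_derivative (\<lambda>k. g'' w * k)) (at w)"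
      using holomorphic_derivI[OF hg' S w, of UNIV] unfolding g''_def has_field_derivative_def
      by simp
    have gw: "g w \<in> M" using gS w by auto
    have dfg: "((\<lambda>w. f (g w)) has_derivative (\<lambda>k. af (g w) * (g' w * k) + bf (g w) * cnj (g' w * k))) (at w)"
      using has_derivative_compose[OF dg df[OF gw]] by simp
    show "(F has_derivative (\<lambda>k. \<alpha> w * k + \<beta> w * cnj k)) (at w)"
      unfolding F_def
      apply (rule has_derivative_eq_rhs)
       apply (rule has_derivative_mult[OF dfg dg'])
      apply (simp add: fun_eq_iff \<alpha>_def \<beta>_def algebra_simps power2_eq_square)
      done
  next
    show "continuous_on S \<alpha>" unfolding \<alpha>_def
      using continuous_on_compose2[OF caf cg gS] continuous_on_compose2[OF cf cg gS]
        holomorphic_on_imp_continuous_on[OF hg'] holomorphic_on_imp_continuous_on[OF hg'']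
      by (auto intro!: continuous_intros)
    show "continuous_on S \<beta>" unfolding \<beta>_def
      using continuous_on_compose2[OF cbf cg gS]
        holomorphic_on_imp_continuous_on[OF hg']
      by (auto intro!: continuous_intros)
  next
    fix w assume "w \<in> S"
    then show "Im (\<beta> w) = 0" using real[of "g w"] gS unfolding \<beta>_def by (auto simp: algebra_simps)
  qed
  then obtain \<Psi> where \<Psi>: "\<And>w. w \<in> S \<Longrightarrow> (\<Psi> has_derivative (\<lambda>k. Re (F w * k))) (at w)" by blast
  show ?thesis
  proof (intro exI ballI)
    fix z assume z: "z \<in> M"
    have pz: "\<phi> z \<in> S" using phM z by auto
    have dph: "(\<phi> has_field_derivative deriv \<phi> z) (at z)"
      using holomorphic_derivI[OF ph M z, of UNIV] by simp
    have dg: "(g has_field_derivative g' (\<phi> z)) (at (\<phi> z))"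
      using holomorphic_derivI[OF g S pz, of UNIV] unfolding g'_def by simp
    have c1: "((\<lambda>z. g (\<phi> z)) has_field_derivative g' (\<phi> z) * deriv \<phi> z) (at z)"
      using DERIV_chain2[OF dg dph] .
    have c2: "((\<lambda>z. g (\<phi> z)) has_field_derivative 1) (at z)"
      by (rule has_field_derivative_transform_within_open[OF DERIV_ident M z]) (simp add: gph)
    have one: "g' (\<phi> z) * deriv \<phi> z = 1" using DERIV_unique[OF c1 c2] .
    have dph': "(\<phi> has_derivative (\<lambda>h. deriv \<phi> z * h)) (at z)"
      using dph unfolding has_field_derivative_def by simp
    have "((\<lambda>z. \<Psi> (\<phi> z)) has_derivative (\<lambda>h. Re (F (\<phi> z) * (deriv \<phi> z * h)))) (at z)"
      using has_derivative_compose[OF dph' \<Psi>[OF pz]] by simp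
    moreover have "F (\<phi> z) * (deriv \<phi> z * h) = f z * h" for h
      unfolding F_def using gph[OF z] one by (simp add: algebra_simps)
    ultimately show "((\<lambda>z. \<Psi> (\<phi> z)) has_derivative (\<lambda>h. Re (f z * h))) (at z)" by simp
  qed
qed


lemma poincare_sc:
  fixes P Q Px Py Qx Qy :: "real \<times> real \<Rightarrow> real" and M :: "(real \<times> real) set"
  assumes M: "open M" and sc: "simply_connected M"
    and dP: "\<And>p. p \<in> M \<Longrightarrow> (P has_derivative (\<lambda>h. Px p * fst h + Py p * snd h)) (at p)"
    and dQ: "\<And>p. p \<in> M \<Longrightarrow> (Q has_derivative (\<lambda>h. Qx p * fst h + Qy p * snd h)) (at p)"
    and c: "continuous_on M Px" "continuous_on M Py" "continuous_on M Qx" "continuous_on M Qy"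
    and closed: "\<And>p. p \<in> M \<Longrightarrow> Py p = Qx p"
  shows "\<exists>\<Phi>. \<forall>p\<in>M. (\<Phi> has_derivative (\<lambda>h. P p * fst h + Q p * snd h)) (at p)"
proof -
  define cc where "cc p = Complex (fst p) (snd p)" for p :: "real \<times> real"
  define d where "d z = (Re z, Im z)" for z
  define M' where "M' = d -` M"
  have dcc: "d (cc p) = p" for p by (simp add: d_def cc_def)
  have ccd: "cc (d z) = z" for z by (simp add: d_def cc_def)
  have lind: "bounded_linear d" unfolding d_def
    by (intro bounded_linear_Pair bounded_linear_Re bounded_linear_Im)
  have ccf: "cc = (\<lambda>p. of_real (fst p) + \<i> * of_real (snd p))"
    by (auto simp: cc_def fun_eq_iff complex_eq_iff)
  have lincc: "bounded_linear cc" unfolding ccf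
    by (intro bounded_linear_intros bounded_linear_compose[OF bounded_linear_of_real bounded_linear_fst]
       bounded_linear_compose[OF bounded_linear_of_real bounded_linear_snd])
  have ccM: "cc ` M = M'" unfolding M'_def
    by (auto simp: dcc ccd image_iff intro!: exI[where x="d _"]) (metis ccd)
  have oM': "open M'" unfolding M'_def
    by (rule open_vimage[OF M]) (simp add: linear_continuous_on lind)
  have "M homeomorphic M'"
    by (rule homeomorphicI[of cc M M' d])
       (auto simp: ccM[symmetric] dcc image_iff linear_continuous_on lind lincc)
  then have sc': "simply_connected M'" using homeomorphic_simply_connected sc by blast
  define Pc where "Pc z = Complex (Px (d z)) (- Qx (d z))" for z
  define Pd where "Pd z = Complex (Py (d z)) (- Qy (d z))" for z
  define f where "f z = Complex (P (d z)) (- Q (d z))" for z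
  define af where "af z = (Pc z - \<i> * Pd z) / 2" for z
  define bf where "bf z = (Pc z + \<i> * Pd z) / 2" for z
  have dd: "(d has_derivative d) (at z)" for z using lind by (rule bounded_linear_imp_has_derivative)
  have df: "(f has_derivative (\<lambda>h. af z * h + bf z * cnj h)) (at z)" if z: "z \<in> M'" for z
  proof -
    have dz: "d z \<in> M" using z by (simp add: M'_def)
    have a: "((\<lambda>z. P (d z)) has_derivative (\<lambda>h. Px (d z) * Re h + Py (d z) * Im h)) (at z)"
      using has_derivative_compose[OF dd dP[OF dz]] by (simp add: d_def)
    have b: "((\<lambda>z. Q (d z)) has_derivative (\<lambda>h. Qx (d z) * Re h + Qy (d z) * Im h)) (at z)"
      using has_derivative_compose[OF dd dQ[OF dz]] by (simp add: d_def)
    have hd: "((\<lambda>z. of_real (P (d z)) - \<i> * of_real (Q (d z))) has_derivative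
        (\<lambda>h. of_real (Px (d z) * Re h + Py (d z) * Im h) - \<i> * of_real (Qx (d z) * Re h + Qy (d z) * Im h))) (at z)"
      by (intro has_derivative_diff has_derivative_mult_right has_derivative_of_real a b)
    have fe: "f = (\<lambda>z. of_real (P (d z)) - \<i> * of_real (Q (d z)))"
      by (auto simp: f_def fun_eq_iff complex_eq_iff)
    show ?thesis unfolding fe
      by (rule has_derivative_eq_rhs[OF hd]) (auto simp: fun_eq_iff complex_eq_iff af_def bf_def Pc_def Pd_def algebra_simps add_divide_distrib[symmetric])
  qed
  have cd: "continuous_on M' d" by (simp add: linear_continuous_on lind)
  have dM: "d ` M' \<subseteq> M" by (auto simp: M'_def)
  have caf: "continuous_on M' af" and cbf: "continuous_on M' bf"
    unfolding af_def bf_def Pc_def Pd_def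
    using continuous_on_compose2[OF c(1) cd dM] continuous_on_compose2[OF c(2) cd dM]
      continuous_on_compose2[OF c(3) cd dM] continuous_on_compose2[OF c(4) cd dM]
    by (auto intro!: continuous_intros)
  have real: "Im (bf z) = 0" if "z \<in> M'" for z
    using closed[of "d z"] that by (simp add: bf_def Pc_def Pd_def M'_def)
  have "\<exists>\<Phi>. \<forall>z\<in>M'. (\<Phi> has_derivative (\<lambda>h. Re (f z * h))) (at z)"
  proof -
    have "M' = {} \<or> M' = UNIV \<or>
           (\<exists>f g. f holomorphic_on M' \<and> g holomorphic_on ball 0 1 \<and>
                 (\<forall>z \<in> M'. f z \<in> ball 0 1 \<and> g(f z) = z) \<and>
                 (\<forall>z \<in> ball 0 1. g z \<in> M' \<and> f(g z) = z))"
      using simply_connected_eq_biholomorphic_to_disc[OF oM'] sc' by blast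
    then consider "M' = {}" | "M' = UNIV" | \<phi> g where "\<phi> holomorphic_on M'" "g holomorphic_on ball 0 1"
          "\<forall>z \<in> M'. \<phi> z \<in> ball 0 1 \<and> g(\<phi> z) = z" "\<forall>z \<in> ball 0 1. g z \<in> M' \<and> \<phi>(g z) = z"
      by blast
    then show ?thesis
    proof cases
      case 1 then show ?thesis by auto
    next
      case 2
      show ?thesis
      proof (rule pullback_poincare[OF oM' open_UNIV _ df caf cbf real, where g="\<lambda>z. z" and \<phi>="\<lambda>z. z"])
      qed (simp_all add: 2)
    next
      case 3
      show ?thesis
      proof (rule pullback_poincare[OF oM' open_ball _ df caf cbf real 3(2) _ 3(1)])
        fix w and t :: real assume a: "w \<in> ball (0::complex) 1" "t \<in> {0..1}"
        have "\<bar>t\<bar> * norm w \<le> 1 * norm w" using a by (intro mult_right_mono) auto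
        then show "t *\<^sub>R w \<in> ball 0 1" using a by (simp add: dist_norm)
      qed (use 3 in auto)
    qed
  qed
  then obtain \<Phi> where \<Phi>: "\<And>z. z \<in> M' \<Longrightarrow> (\<Phi> has_derivative (\<lambda>h. Re (f z * h))) (at z)" by blast
  show ?thesis
  proof (intro exI ballI)
    fix p assume p: "p \<in> M"
    have cp: "cc p \<in> M'" using ccM p by auto
    have dcp: "(cc has_derivative cc) (at p)" using lincc by (rule bounded_linear_imp_has_derivative)
    have "((\<lambda>p. \<Phi> (cc p)) has_derivative (\<lambda>h. Re (f (cc p) * cc h))) (at p)"
      using has_derivative_compose[OF dcp \<Phi>[OF cp]] by simp
    then show "((\<lambda>p. \<Phi> (cc p)) has_derivative (\<lambda>h. P p * fst h + Q p * snd h)) (at p)"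
      by (simp add: f_def dcc cc_def d_def)
  qed
qed


lemma partial_derivs:
  fixes f :: "real \<times> real \<Rightarrow> real"
  assumes "(f has_derivative (\<lambda>h. a * fst h + b * snd h)) (at (s,t))"
  shows "((\<lambda>s. f (s,t)) has_real_derivative a) (at s)"
    and "((\<lambda>t. f (s,t)) has_real_derivative b) (at t)"
proof -
  have l1: "((\<lambda>s. (s,t)) has_derivative (\<lambda>u. (u,0))) (at s)"
    by (auto intro!: derivative_eq_intros)
  have l2: "((\<lambda>t. (s,t)) has_derivative (\<lambda>u. (0,u))) (at t)"
    by (auto intro!: derivative_eq_intros)
  show "((\<lambda>s. f (s,t)) has_real_derivative a) (at s)"
    using has_derivative_compose[OF l1 assms] unfolding has_field_derivative_def
    by (simp add: mult.commute[of _ a] fun_eq_iff[symmetric])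
  show "((\<lambda>t. f (s,t)) has_real_derivative b) (at t)"
    using has_derivative_compose[OF l2 assms] unfolding has_field_derivative_def
    by (simp add: mult.commute[of _ b] fun_eq_iff[symmetric])
qed

lemma px_py_eq:
  fixes f :: "real \<times> real \<Rightarrow> real"
  assumes "(f has_derivative (\<lambda>h. a * fst h + b * snd h)) (at p)"
  shows "px f p = a" "py f p = b"
proof -
  obtain s t where p: "p = (s,t)" by fastforce
  show "px f p = a" using partial_derivs(1)[OF assms[unfolded p]] unfolding p px_def
    by (simp add: vector_derivative_at has_real_derivative_iff_has_vector_derivative)
  show "py f p = b" using partial_derivs(2)[OF assms[unfolded p]] unfolding p py_def
    by (simp add: vector_derivative_at has_real_derivative_iff_has_vector_derivative)
qed

lemma abs_contra: "\<bar>u - a\<bar> < \<bar>a - b\<bar> / 2 \<Longrightarrow> \<bar>u - b\<bar> < \<bar>a - b\<bar> / 2 \<Longrightarrow> False" for u a b :: real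
  by (auto simp: abs_if split: if_split_asm)

lemma schwarz:
  fixes f fx fy fxx fxy fyx fyy :: "real \<times> real \<Rightarrow> real"
  assumes M: "open M" and p: "p \<in> M"
    and df: "\<And>q. q \<in> M \<Longrightarrow> (f has_derivative (\<lambda>h. fx q * fst h + fy q * snd h)) (at q)"
    and dfx: "\<And>q. q \<in> M \<Longrightarrow> (fx has_derivative (\<lambda>h. fxx q * fst h + fxy q * snd h)) (at q)"
    and dfy: "\<And>q. q \<in> M \<Longrightarrow> (fy has_derivative (\<lambda>h. fyx q * fst h + fyy q * snd h)) (at q)"
    and c1: "continuous_on M fxy" and c2: "continuous_on M fyx"
  shows "fxy p = fyx p"
proof (rule ccontr)
  assume ne: "fxy p \<noteq> fyx p"
  define e where "e = \<bar>fxy p - fyx p\<bar> / 2"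
  have e: "e > 0" using ne by (simp add: e_def)
  obtain r where r: "r > 0" "ball p r \<subseteq> M" using M p open_contains_ball by blast
  have "continuous (at p) fxy" using c1 M p continuous_on_eq_continuous_at by blast
  then obtain d1 where d1: "d1 > 0" "\<And>q. dist q p < d1 \<Longrightarrow> dist (fxy q) (fxy p) < e"
    using e unfolding continuous_at_eps_delta by blast
  have "continuous (at p) fyx" using c2 M p continuous_on_eq_continuous_at by blast
  then obtain d2 where d2: "d2 > 0" "\<And>q. dist q p < d2 \<Longrightarrow> dist (fyx q) (fyx p) < e"
    using e unfolding continuous_at_eps_delta by blast
  define d where "d = min (min d1 d2) r"
  have d: "d > 0" using d1 d2 r by (simp add: d_def)
  define h where "h = d / 2"
  have h: "h > 0" using d by (simp add: h_def)
  obtain x y where xy: "p = (x, y)" by fastforce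
  define B where "B = {x..x+h} \<times> {y..y+h}"
  have distB: "dist q p < d" if "q \<in> B" for q
  proof -
    obtain s t where q: "q = (s,t)" by fastforce
    have "(s - x)\<^sup>2 + (t - y)\<^sup>2 \<le> h\<^sup>2 + h\<^sup>2"
      using that h unfolding B_def q by (intro add_mono power_mono) auto
    also have "\<dots> < d\<^sup>2" using h by (simp add: h_def power2_eq_square)
    finally have "sqrt ((s - x)\<^sup>2 + (t - y)\<^sup>2) < sqrt (d\<^sup>2)" by (rule real_sqrt_less_mono)
    then show ?thesis using d by (simp add: q xy dist_Pair_Pair dist_real_def)
  qed
  have inM: "q \<in> M" if "q \<in> B" for q
    using distB[OF that] r by (auto simp: d_def dist_commute)
  have bxy: "\<bar>fxy q - fxy p\<bar> < e" if "q \<in> B" for q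
    using d1(2)[of q] distB[OF that] by (simp add: d_def dist_real_def)
  have byx: "\<bar>fyx q - fyx p\<bar> < e" if "q \<in> B" for q
    using d2(2)[of q] distB[OF that] by (simp add: d_def dist_real_def)
  have hh: "x < x + h" "y < y + h" using h by auto
  define \<Delta> where "\<Delta> = f (x+h, y+h) - f (x+h, y) - f (x, y+h) + f (x, y)"
  have der1: "\<And>s. x \<le> s \<Longrightarrow> s \<le> x + h \<Longrightarrow> ((\<lambda>s. f (s, y+h) - f (s, y)) has_real_derivative (fx (s, y+h) - fx (s, y))) (at s)"
    using h by (auto intro!: DERIV_diff partial_derivs(1)[OF df] inM simp: B_def)
  obtain \<xi> where \<xi>: "x < \<xi>" "\<xi> < x + h"
    "(f (x+h, y+h) - f (x+h, y)) - (f (x, y+h) - f (x, y)) = h * (fx (\<xi>, y+h) - fx (\<xi>, y))"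
    using MVT2[OF hh(1) der1] by auto
  have der2: "\<And>t. y \<le> t \<Longrightarrow> t \<le> y + h \<Longrightarrow> ((\<lambda>t. fx (\<xi>, t)) has_real_derivative fxy (\<xi>, t)) (at t)"
    using h \<xi> by (auto intro!: partial_derivs(2)[OF dfx] inM simp: B_def)
  obtain \<eta> where \<eta>: "y < \<eta>" "\<eta> < y + h" "fx (\<xi>, y+h) - fx (\<xi>, y) = h * fxy (\<xi>, \<eta>)"
    using MVT2[OF hh(2) der2] by auto
  have der3: "\<And>t. y \<le> t \<Longrightarrow> t \<le> y + h \<Longrightarrow> ((\<lambda>t. f (x+h, t) - f (x, t)) has_real_derivative (fy (x+h, t) - fy (x, t))) (at t)"
    using h by (auto intro!: DERIV_diff partial_derivs(2)[OF df] inM simp: B_def)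
  obtain \<zeta> where \<zeta>: "y < \<zeta>" "\<zeta> < y + h"
    "(f (x+h, y+h) - f (x, y+h)) - (f (x+h, y) - f (x, y)) = h * (fy (x+h, \<zeta>) - fy (x, \<zeta>))"
    using MVT2[OF hh(2) der3] by auto
  have der4: "\<And>s. x \<le> s \<Longrightarrow> s \<le> x + h \<Longrightarrow> ((\<lambda>s. fy (s, \<zeta>)) has_real_derivative fyx (s, \<zeta>)) (at s)"
    using h \<zeta> by (auto intro!: partial_derivs(1)[OF dfy] inM simp: B_def)
  obtain \<theta> where \<theta>: "x < \<theta>" "\<theta> < x + h" "fy (x+h, \<zeta>) - fy (x, \<zeta>) = h * fyx (\<theta>, \<zeta>)"
    using MVT2[OF hh(1) der4] by auto
  have "h * (h * fxy (\<xi>, \<eta>)) = h * (h * fyx (\<theta>, \<zeta>))"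
    using \<xi>(3) \<eta>(3) \<zeta>(3) \<theta>(3) by (simp add: algebra_simps)
  then have eq: "fxy (\<xi>, \<eta>) = fyx (\<theta>, \<zeta>)" using h by simp
  have "\<bar>fxy (\<xi>, \<eta>) - fxy p\<bar> < e" using bxy \<xi> \<eta> by (simp add: B_def)
  moreover have "\<bar>fyx (\<theta>, \<zeta>) - fyx p\<bar> < e" using byx \<theta> \<zeta> by (simp add: B_def)
  ultimately have "\<bar>fyx (\<theta>, \<zeta>) - fxy p\<bar> < \<bar>fxy p - fyx p\<bar> / 2" "\<bar>fyx (\<theta>, \<zeta>) - fyx p\<bar> < \<bar>fxy p - fyx p\<bar> / 2"
    using eq unfolding e_def by auto
  then show False by (rule abs_contra)
qed

lemma poly1:
  fixes e1 e2 sA sB a b c d r1 s1 t1 r2 s2 t2 :: real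
  defines "E \<equiv> e1 + sA * a * a + sB * c * c" and "F \<equiv> sA * a * b + sB * c * d" and "G \<equiv> e2 + sA * b * b + sB * d * d"
  defines "Edx \<equiv> 2 * sA * a * r1 + 2 * sB * c * r2" and "Edy \<equiv> 2 * sA * a * s1 + 2 * sB * c * s2"
  defines "Fdx \<equiv> sA * (r1 * b + a * s1) + sB * (r2 * d + c * s2)" and "Fdy \<equiv> sA * (s1 * b + a * t1) + sB * (s2 * d + c * t2)"
  defines "Gdx \<equiv> 2 * sA * b * s1 + 2 * sB * d * s2" and "Gdy \<equiv> 2 * sA * b * t1 + 2 * sB * d * t2"
  defines "D \<equiv> E * G - F * F"
  defines "Ddx \<equiv> Edx * G + E * Gdx - 2 * F * Fdx" and "Ddy \<equiv> Edy * G + E * Gdy - 2 * F * Fdy"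
  shows "2 * D * (Edy - Fdx) - (E * Ddy - F * Ddx) = 2 * sA * (F * a - E * b) * (G * r1 - 2 * F * s1 + E * t1) + 2 * sB * (F * c - E * d) * (G * r2 - 2 * F * s2 + E * t2)"
    and "2 * D * (Fdy - Gdx) - (F * Ddy - G * Ddx) = 2 * sA * (a * G - F * b) * (G * r1 - 2 * F * s1 + E * t1) + 2 * sB * (c * G - F * d) * (G * r2 - 2 * F * s2 + E * t2)"
  unfolding assms by algebra+


lemma mk4_nth [simp]: "mk4 a b c d $ 1 = a" "mk4 a b c d $ 2 = b" "mk4 a b c d $ 3 = c" "mk4 a b c d $ 4 = d"
  by (simp_all add: mk4_def)

lemma lip_mk4 [simp]: "lip (mk4 a b c d) (mk4 a' b' c' d') = - (a * a') + b * b' + c * c' + d * d'"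
  by (simp add: lip_def)

definition e4 :: "4 \<Rightarrow> real^4" where "e4 k = (\<chi> i. if i = k then 1 else 0)"

lemma mk4_decomp: "mk4 a b c d = a *\<^sub>R e4 1 + b *\<^sub>R e4 2 + c *\<^sub>R e4 3 + d *\<^sub>R e4 4"
  unfolding vec_eq_iff mk4_def e4_def
  apply (rule allI)
  subgoal for i using exhaust_4[of i] by auto
  done

lemma mk4_vd:
  assumes "(f1 has_real_derivative a) (at t)" "(f2 has_real_derivative b) (at t)"
    "(f3 has_real_derivative c) (at t)" "(f4 has_real_derivative d) (at t)"
  shows "((\<lambda>t. mk4 (f1 t) (f2 t) (f3 t) (f4 t)) has_vector_derivative mk4 a b c d) (at t)"
proof -
  have l: "((\<lambda>t. g t *\<^sub>R e4 k) has_vector_derivative g' *\<^sub>R e4 k) (at t)"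
    if "(g has_real_derivative g') (at t)" for g g' k
    using has_vector_derivative_scaleR[OF that has_vector_derivative_const[of "e4 k"]] by simp
  show ?thesis unfolding mk4_decomp
    by (intro has_vector_derivative_add l assms)
qed

definition hdv :: "(real \<times> real \<Rightarrow> real) \<Rightarrow> (real \<times> real \<Rightarrow> real) \<Rightarrow> (real \<times> real \<Rightarrow> real) \<Rightarrow> real \<times> real \<Rightarrow> bool" where
  "hdv f fx fy p \<longleftrightarrow> (f has_derivative (\<lambda>h. fx p * fst h + fy p * snd h)) (at p)"

lemma px_mk4:
  fixes X :: "real \<times> real \<Rightarrow> real^4"
  assumes M: "open M" and p: "p \<in> M" and X: "\<And>q. q \<in> M \<Longrightarrow> X q = mk4 (f1 q) (f2 q) (f3 q) (f4 q)"
    and h: "hdv f1 f1x f1y p" "hdv f2 f2x f2y p" "hdv f3 f3x f3y p" "hdv f4 f4x f4y p"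
  shows "px X p = mk4 (f1x p) (f2x p) (f3x p) (f4x p)"
    and "py X p = mk4 (f1y p) (f2y p) (f3y p) (f4y p)"
proof -
  obtain x y where xy: "p = (x, y)" by fastforce
  have o1: "open {t. (t, y) \<in> M}"
    by (rule continuous_open_vimage[OF M, of "\<lambda>t. (t, y)", unfolded vimage_def]) (auto intro!: continuous_intros)
  have o2: "open {t. (x, t) \<in> M}"
    by (rule continuous_open_vimage[OF M, of "\<lambda>t. (x, t)", unfolded vimage_def]) (auto intro!: continuous_intros)
  have "((\<lambda>t. mk4 (f1 (t,y)) (f2 (t,y)) (f3 (t,y)) (f4 (t,y))) has_vector_derivative
        mk4 (f1x p) (f2x p) (f3x p) (f4x p)) (at x)"
    using h unfolding hdv_def xy by (intro mk4_vd partial_derivs(1)) auto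
  then have "((\<lambda>t. X (t, y)) has_vector_derivative mk4 (f1x p) (f2x p) (f3x p) (f4x p)) (at x)"
    by (rule has_vector_derivative_transform_within_open[OF _ o1]) (use p xy X in auto)
  then show "px X p = mk4 (f1x p) (f2x p) (f3x p) (f4x p)"
    unfolding px_def xy by (simp add: vector_derivative_at)
  have "((\<lambda>t. mk4 (f1 (x,t)) (f2 (x,t)) (f3 (x,t)) (f4 (x,t))) has_vector_derivative
        mk4 (f1y p) (f2y p) (f3y p) (f4y p)) (at y)"
    using h unfolding hdv_def xy by (intro mk4_vd partial_derivs(2)) auto
  then have "((\<lambda>t. X (x, t)) has_vector_derivative mk4 (f1y p) (f2y p) (f3y p) (f4y p)) (at y)"
    by (rule has_vector_derivative_transform_within_open[OF _ o2]) (use p xy X in auto)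
  then show "py X p = mk4 (f1y p) (f2y p) (f3y p) (f4y p)"
    unfolding py_def xy by (simp add: vector_derivative_at)
qed

lemma hdv_fst: "hdv fst (\<lambda>_. 1) (\<lambda>_. 0) p" unfolding hdv_def by (auto intro!: derivative_eq_intros)
lemma hdv_snd: "hdv snd (\<lambda>_. 0) (\<lambda>_. 1) p" unfolding hdv_def by (auto intro!: derivative_eq_intros)
lemma hdv_const: "hdv (\<lambda>_. k) (\<lambda>_. 0) (\<lambda>_. 0) p" unfolding hdv_def by (auto intro!: derivative_eq_intros)

lemma mc_zero:
  assumes "mean_curv X p = 0" and D: "EE X p * GG X p - (FF X p)\<^sup>2 > 0"
  shows "\<exists>\<alpha> \<beta>. GG X p *\<^sub>R px (px X) p - (2 * FF X p) *\<^sub>R py (px X) p + EE X p *\<^sub>R py (py X) p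
     = \<alpha> *\<^sub>R px X p + \<beta> *\<^sub>R py X p"
proof -
  define E where "E = EE X p"
  define F where "F = FF X p"
  define G where "G = GG X p"
  define Xx where "Xx = px X p"
  define Xy where "Xy = py X p"
  define w1 where "w1 = px (px X) p"
  define w2 where "w2 = py (px X) p"
  define w3 where "w3 = py (py X) p"
  define Dd where "Dd = E * G - F\<^sup>2"
  define ca where "ca w = (G * lip w Xx - F * lip w Xy) / Dd" for w
  define cb where "cb w = (E * lip w Xy - F * lip w Xx) / Dd" for w
  have np: "nproj X p w = w - ca w *\<^sub>R Xx - cb w *\<^sub>R Xy" for w
    unfolding nproj_def ca_def cb_def Let_def E_def F_def G_def Dd_def Xx_def Xy_def EE_def FF_def GG_def ..
  have "mean_curv X p = (1 / (2 * Dd)) *\<^sub>R (G *\<^sub>R nproj X p w1 - (2 * F) *\<^sub>R nproj X p w2 + E *\<^sub>R nproj X p w3)"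
    unfolding mean_curv_def Let_def Dd_def E_def F_def G_def w1_def w2_def w3_def ..
  with assms(1) have "G *\<^sub>R nproj X p w1 - (2 * F) *\<^sub>R nproj X p w2 + E *\<^sub>R nproj X p w3 = 0"
    using D by (simp add: Dd_def E_def F_def G_def)
  moreover have "G *\<^sub>R w1 - (2 * F) *\<^sub>R w2 + E *\<^sub>R w3 -
      ((G * ca w1 - 2 * F * ca w2 + E * ca w3) *\<^sub>R Xx + (G * cb w1 - 2 * F * cb w2 + E * cb w3) *\<^sub>R Xy)
      = G *\<^sub>R nproj X p w1 - (2 * F) *\<^sub>R nproj X p w2 + E *\<^sub>R nproj X p w3"
    unfolding np by (simp add: algebra_simps)
  ultimately have "G *\<^sub>R w1 - (2 * F) *\<^sub>R w2 + E *\<^sub>R w3 =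
      (G * ca w1 - 2 * F * ca w2 + E * ca w3) *\<^sub>R Xx + (G * cb w1 - 2 * F * cb w2 + E * cb w3) *\<^sub>R Xy"
    by simp
  then show ?thesis unfolding E_def F_def G_def w1_def w2_def w3_def Xx_def Xy_def by blast
qed


lemma hdv_add: "hdv f fx fy p \<Longrightarrow> hdv g gx gy p \<Longrightarrow> hdv (\<lambda>q. f q + g q) (\<lambda>q. fx q + gx q) (\<lambda>q. fy q + gy q) p"
  unfolding hdv_def by (rule has_derivative_eq_rhs[OF has_derivative_add], assumption, assumption) (auto simp: fun_eq_iff algebra_simps)

lemma hdv_diff: "hdv f fx fy p \<Longrightarrow> hdv g gx gy p \<Longrightarrow> hdv (\<lambda>q. f q - g q) (\<lambda>q. fx q - gx q) (\<lambda>q. fy q - gy q) p"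
  unfolding hdv_def by (rule has_derivative_eq_rhs[OF has_derivative_diff], assumption, assumption) (auto simp: fun_eq_iff algebra_simps)

lemma hdv_mult: "hdv f fx fy p \<Longrightarrow> hdv g gx gy p \<Longrightarrow>
   hdv (\<lambda>q. f q * g q) (\<lambda>q. fx q * g q + f q * gx q) (\<lambda>q. fy q * g q + f q * gy q) p"
  unfolding hdv_def by (rule has_derivative_eq_rhs[OF has_derivative_mult], assumption, assumption) (auto simp: fun_eq_iff algebra_simps)

lemma hdv_divide:
  assumes "hdv f fx fy p" "hdv g gx gy p" "g p \<noteq> 0"
  shows "hdv (\<lambda>q. f q / g q) (\<lambda>q. (fx q * g q - f q * gx q) / (g q * g q)) (\<lambda>q. (fy q * g q - f q * gy q) / (g q * g q)) p"
proof -
  have d: "((\<lambda>q. f q / g q) has_derivative (\<lambda>h. - f p * (inverse (g p) * (gx p * fst h + gy p * snd h) * inverse (g p)) + (fx p * fst h + fy p * snd h) / g p)) (at p)"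
    using has_derivative_divide[OF assms(1,2)[unfolded hdv_def] assms(3)] .
  have e: "- f p * (inverse (g p) * (gx p * fst h + gy p * snd h) * inverse (g p)) + (fx p * fst h + fy p * snd h) / g p
     = (fx p * g p - f p * gx p) / (g p * g p) * fst h + (fy p * g p - f p * gy p) / (g p * g p) * snd h" for h
    using assms(3) by (simp add: field_simps)
  show ?thesis unfolding hdv_def using d unfolding e .
qed

lemma hdv_sqrt:
  assumes "hdv f fx fy p" "f p > 0"
  shows "hdv (\<lambda>q. sqrt (f q)) (\<lambda>q. fx q / (2 * sqrt (f q))) (\<lambda>q. fy q / (2 * sqrt (f q))) p"
proof -
  have s: "(sqrt has_derivative (*) (inverse (sqrt (f p)) / 2)) (at (f p))"
    using DERIV_real_sqrt[OF assms(2)] unfolding has_field_derivative_def .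
  have d: "((\<lambda>q. sqrt (f q)) has_derivative (\<lambda>h. (inverse (sqrt (f p)) / 2) * (fx p * fst h + fy p * snd h))) (at p)"
    using has_derivative_compose[OF assms(1)[unfolded hdv_def] s] .
  have e: "(inverse (sqrt (f p)) / 2) * (fx p * fst h + fy p * snd h) = fx p / (2 * sqrt (f p)) * fst h + fy p / (2 * sqrt (f p)) * snd h" for h
    using assms(2) by (simp add: field_simps)
  show ?thesis unfolding hdv_def using d unfolding e .
qed

lemma hdv_cong: "hdv f fx fy p \<Longrightarrow> fx p = gx p \<Longrightarrow> fy p = gy p \<Longrightarrow> hdv f gx gy p"
  unfolding hdv_def by simp

lemma Ck_hdv:
  assumes M: "open M" and C: "Ck_on (Suc k) M f" and p: "p \<in> M"
  shows "hdv f (px f) (py f) p"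
proof -
  have "f differentiable_on M" using C by (simp only: Ck_on.simps)
  then have "f differentiable (at p within M)" using p unfolding differentiable_on_def by blast
  then have "f differentiable (at p)" using at_within_open[OF p M] by simp
  then obtain f' where f': "(f has_derivative f') (at p)" unfolding differentiable_def by blast
  have lin: "linear f'" using has_derivative_linear[OF f'] .
  have eq: "f' h = f' (1,0) * fst h + f' (0,1) * snd h" for h
  proof -
    obtain a b where hab: "h = (a, b)" by fastforce
    have "(a, b) = a *\<^sub>R (1::real,0::real) + b *\<^sub>R (0,1)" by simp
    then have "f' (a, b) = f' (a *\<^sub>R (1,0) + b *\<^sub>R (0,1))" by (rule arg_cong)
    also have "\<dots> = a * f' (1,0) + b * f' (0,1)"
      by (simp only: linear_add[OF lin] linear_cmul[OF lin] real_scaleR_def)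
    finally show ?thesis using hab by (simp add: mult.commute)
  qed
  have "f' = (\<lambda>h. f' (1,0) * fst h + f' (0,1) * snd h)" by (rule ext) (rule eq)
  then have h: "(f has_derivative (\<lambda>h. f' (1,0) * fst h + f' (0,1) * snd h)) (at p)"
    using f' by metis
  show ?thesis unfolding hdv_def using h px_py_eq[OF h] by simp
qed

lemma smooth_unpack:
  assumes M: "open M" and s: "smooth_on M f"
  shows "\<And>p. p \<in> M \<Longrightarrow> hdv f (px f) (py f) p"
    and "\<And>p. p \<in> M \<Longrightarrow> hdv (px f) (px (px f)) (py (px f)) p"
    and "\<And>p. p \<in> M \<Longrightarrow> hdv (py f) (px (py f)) (py (py f)) p"
    and "continuous_on M (px f)" "continuous_on M (py f)"
    and "continuous_on M (px (px f))" "continuous_on M (py (px f))"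
    and "continuous_on M (px (py f))" "continuous_on M (py (py f))"
    and "\<And>p. p \<in> M \<Longrightarrow> py (px f) p = px (py f) p"
proof -
  have C3: "Ck_on (Suc (Suc (Suc 0))) M f" using s unfolding smooth_on_def by blast
  then have C2x: "Ck_on (Suc (Suc 0)) M (px f)" and C2y: "Ck_on (Suc (Suc 0)) M (py f)" by auto
  show h1: "\<And>p. p \<in> M \<Longrightarrow> hdv f (px f) (py f) p" using Ck_hdv[OF M C3] .
  show h2: "\<And>p. p \<in> M \<Longrightarrow> hdv (px f) (px (px f)) (py (px f)) p" using Ck_hdv[OF M C2x] .
  show h3: "\<And>p. p \<in> M \<Longrightarrow> hdv (py f) (px (py f)) (py (py f)) p" using Ck_hdv[OF M C2y] .
  show "continuous_on M (px f)" "continuous_on M (py f)" using C2x C2y by auto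
  show c1: "continuous_on M (px (px f))" "continuous_on M (py (px f))" using C2x by auto
  show c2: "continuous_on M (px (py f))" "continuous_on M (py (py f))" using C2y by auto
  show "\<And>p. p \<in> M \<Longrightarrow> py (px f) p = px (py f) p"
    by (rule schwarz[OF M _ h1[unfolded hdv_def] h2[unfolded hdv_def] h3[unfolded hdv_def] c1(2) c2(1)])
qed


lemma closed_alg:
  fixes W D E F Ey Fx Dx Dy :: real
  assumes W: "W > 0" and WD: "W * W = D" and id: "2*D*(Ey - Fx) - (E*Dy - F*Dx) = 0"
  shows "(Ey * W - E * (Dy / (2 * W))) / (W * W) = (Fx * W - F * (Dx / (2 * W))) / (W * W)"
proof -
  have "Ey * W - E * (Dy / (2 * W)) - (Fx * W - F * (Dx / (2 * W))) = (2*(W*W)*(Ey - Fx) - (E*Dy - F*Dx)) / (2 * W)"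
    using W by (simp add: field_simps)
  also have "\<dots> = 0" using id WD by simp
  finally show ?thesis by simp
qed

lemma final_alg:
  fixes E F G W ux uy vx vy :: real
  assumes E: "E > 0" and D: "E * G - F\<^sup>2 > 0" and W: "W = sqrt (E * G - F\<^sup>2)"
    and u: "ux = 1 + E / W" "uy = F / W" and v: "vx = F / W" "vy = 1 + G / W"
  shows "uy = F / E * ux - W / E * vx \<and> vy = W / E * ux + F / E * vx"
    and "ux * vy - uy * vx \<noteq> 0"
    and "\<exists>l>0. E = l\<^sup>2 * (ux\<^sup>2 + vx\<^sup>2) \<and> F = l\<^sup>2 * (ux * uy + vx * vy) \<and> G = l\<^sup>2 * (uy\<^sup>2 + vy\<^sup>2)"
proof -
  have Wp: "W > 0" using D W by simp
  have WW: "W * W = E * G - F * F" using D W by (simp add: power2_eq_square[symmetric])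
  have G: "G > 0"
  proof (rule ccontr)
    assume "\<not> G > 0"
    then have "E * G \<le> 0" using E by (simp add: mult_nonneg_nonpos)
    then show False using D by (smt (verit) zero_le_power2)
  qed
  show "uy = F / E * ux - W / E * vx \<and> vy = W / E * ux + F / E * vx"
  proof
    show "uy = F / E * ux - W / E * vx" using E Wp unfolding u v by (simp add: field_simps)
    have "W / E * ux + F / E * vx = (W * W + F * F + E * W) / (E * W)"
      using E Wp unfolding u v by (simp add: field_simps)
    also have "\<dots> = (E * G + E * W) / (E * W)" using WW by simp
    also have "\<dots> = vy" using E Wp unfolding v by (simp add: field_simps)
    finally show "vy = W / E * ux + F / E * vx" by simp
  qed
  have jac: "ux * vy - uy * vx = (W * W + (E + G) * W + (E * G - F * F)) / (W * W)"
    using Wp unfolding u v by (simp add: field_simps)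
  also have "\<dots> = (2 * (W * W) + (E + G) * W) / (W * W)" using WW by simp
  also have "\<dots> > 0" using Wp E G by (intro divide_pos_pos add_pos_pos) auto
  finally show "ux * vy - uy * vx \<noteq> 0" by simp
  define S where "S = 2 * W + E + G"
  have S: "S > 0" using Wp E G by (simp add: S_def)
  define l where "l = W / sqrt S"
  have l2: "l\<^sup>2 = W * W / S" using S by (simp add: l_def power_divide power2_eq_square)
  have e1: "ux\<^sup>2 + vx\<^sup>2 = E * S / (W * W)"
  proof -
    have "ux\<^sup>2 + vx\<^sup>2 = (W * W + 2 * E * W + E * E + F * F) / (W * W)"
      using Wp unfolding u v by (simp add: field_simps power2_eq_square)
    also have "\<dots> = E * S / (W * W)" using WW by (simp add: S_def algebra_simps)
    finally show ?thesis .
  qed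
  have e2: "ux * uy + vx * vy = F * S / (W * W)"
    using Wp unfolding u v S_def by (simp add: field_simps)
  have e3: "uy\<^sup>2 + vy\<^sup>2 = G * S / (W * W)"
  proof -
    have "uy\<^sup>2 + vy\<^sup>2 = (F * F + W * W + 2 * G * W + G * G) / (W * W)"
      using Wp unfolding u v by (simp add: field_simps power2_eq_square)
    also have "\<dots> = G * S / (W * W)" using WW by (simp add: S_def algebra_simps)
    finally show ?thesis .
  qed
  show "\<exists>l>0. E = l\<^sup>2 * (ux\<^sup>2 + vx\<^sup>2) \<and> F = l\<^sup>2 * (ux * uy + vx * vy) \<and> G = l\<^sup>2 * (uy\<^sup>2 + vy\<^sup>2)"
  proof (intro exI conjI)
    show "l > 0" using Wp S by (simp add: l_def)
    show "E = l\<^sup>2 * (ux\<^sup>2 + vx\<^sup>2)" unfolding l2 e1 using Wp S by (simp add: field_simps)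
    show "F = l\<^sup>2 * (ux * uy + vx * vy)" unfolding l2 e2 using Wp S by (simp add: field_simps)
    show "G = l\<^sup>2 * (uy\<^sup>2 + vy\<^sup>2)" unfolding l2 e3 using Wp S by (simp add: field_simps)
  qed
qed


lemma graph_geo:
  fixes A B a b c d r1 s1 t1 r2 s2 t2 :: "real \<times> real \<Rightarrow> real" and X :: "real \<times> real \<Rightarrow> real^4"
  assumes M: "open M" and X: "X = graph1 A B \<or> X = graph2 A B" and q: "q \<in> M"
    and ha: "\<And>q. q \<in> M \<Longrightarrow> hdv A a b q" and hc: "\<And>q. q \<in> M \<Longrightarrow> hdv B c d q"
    and ha2: "\<And>q. q \<in> M \<Longrightarrow> hdv a r1 s1 q" and hb2: "\<And>q. q \<in> M \<Longrightarrow> hdv b s1 t1 q"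
    and hc2: "\<And>q. q \<in> M \<Longrightarrow> hdv c r2 s2 q" and hd2: "\<And>q. q \<in> M \<Longrightarrow> hdv d s2 t2 q"
    and sp: "spacelike_on M X" and mn: "minimal_on M X"
  shows "\<exists>e1 e2 sA sB. \<forall>q\<in>M. EE X q = e1 + sA * a q * a q + sB * c q * c q \<and>
        FF X q = sA * a q * b q + sB * c q * d q \<and> GG X q = e2 + sA * b q * b q + sB * d q * d q \<and>
        GG X q * r1 q - 2 * FF X q * s1 q + EE X q * t1 q = 0 \<and>
        GG X q * r2 q - 2 * FF X q * s2 q + EE X q * t2 q = 0"
  using X
proof
  assume X1: "X = graph1 A B"
  have Xq: "\<And>q. q \<in> M \<Longrightarrow> X q = mk4 (A q) (fst q) (snd q) (B q)" using X1 by (simp add: graph1_def)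
  have pX: "px X q = mk4 (a q) 1 0 (c q)" "py X q = mk4 (b q) 0 1 (d q)" if q: "q \<in> M" for q
    using px_mk4[OF M q Xq ha[OF q] hdv_fst hdv_snd hc[OF q]] by simp_all
  have pXq: "\<And>q. q \<in> M \<Longrightarrow> px X q = mk4 (a q) ((\<lambda>_. 1) q) ((\<lambda>_. 0) q) (c q)"
   and pYq: "\<And>q. q \<in> M \<Longrightarrow> py X q = mk4 (b q) ((\<lambda>_. 0) q) ((\<lambda>_. 1) q) (d q)" using pX by simp_all
  have ppX: "px (px X) q = mk4 (r1 q) 0 0 (r2 q)" "py (px X) q = mk4 (s1 q) 0 0 (s2 q)" if q: "q \<in> M" for q
    using px_mk4[OF M q pXq ha2[OF q] hdv_const hdv_const hc2[OF q]] by simp_all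
  have ppY: "py (py X) q = mk4 (t1 q) 0 0 (t2 q)" if q: "q \<in> M" for q
    using px_mk4(2)[OF M q pYq hb2[OF q] hdv_const hdv_const hd2[OF q]] by simp
  show ?thesis
  proof (intro exI ballI conjI)
    fix q assume q: "q \<in> M"
    show E: "EE X q = 1 + (-1) * a q * a q + 1 * c q * c q" unfolding EE_def pX[OF q] by simp
    show F: "FF X q = (-1) * a q * b q + 1 * c q * d q" unfolding FF_def pX[OF q] by simp
    show G: "GG X q = 1 + (-1) * b q * b q + 1 * d q * d q" unfolding GG_def pX[OF q] by simp
    have D: "EE X q * GG X q - (FF X q)\<^sup>2 > 0" using sp q by (simp add: spacelike_on_def)
    obtain \<alpha> \<beta> where ab: "GG X q *\<^sub>R px (px X) q - (2 * FF X q) *\<^sub>R py (px X) q + EE X q *\<^sub>R py (py X) q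
       = \<alpha> *\<^sub>R px X q + \<beta> *\<^sub>R py X q"
      using mc_zero[OF _ D] mn q by (auto simp: minimal_on_def)
    note ab = ab[unfolded pX[OF q] ppX[OF q] ppY[OF q]]
    have "\<alpha> = 0" using arg_cong[OF ab, of "\<lambda>v. vec_nth v 2"] by simp
    moreover have "\<beta> = 0" using arg_cong[OF ab, of "\<lambda>v. vec_nth v 3"] by simp
    ultimately have 1: "GG X q * r1 q - 2 * FF X q * s1 q + EE X q * t1 q = 0"
      and 4: "GG X q * r2 q - 2 * FF X q * s2 q + EE X q * t2 q = 0"
      using arg_cong[OF ab, of "\<lambda>v. vec_nth v 1"] arg_cong[OF ab, of "\<lambda>v. vec_nth v 4"] by simp_all
    show "GG X q * r1 q - 2 * FF X q * s1 q + EE X q * t1 q = 0" by (rule 1)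
    show "GG X q * r2 q - 2 * FF X q * s2 q + EE X q * t2 q = 0" by (rule 4)
  qed
next
  assume X2: "X = graph2 A B"
  have Xq: "\<And>q. q \<in> M \<Longrightarrow> X q = mk4 (fst q) (A q) (B q) (snd q)" using X2 by (simp add: graph2_def)
  have pX: "px X q = mk4 1 (a q) (c q) 0" "py X q = mk4 0 (b q) (d q) 1" if q: "q \<in> M" for q
    using px_mk4[OF M q Xq hdv_fst ha[OF q] hc[OF q] hdv_snd] by simp_all
  have pXq: "\<And>q. q \<in> M \<Longrightarrow> px X q = mk4 ((\<lambda>_. 1) q) (a q) (c q) ((\<lambda>_. 0) q)"
   and pYq: "\<And>q. q \<in> M \<Longrightarrow> py X q = mk4 ((\<lambda>_. 0) q) (b q) (d q) ((\<lambda>_. 1) q)" using pX by simp_all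
  have ppX: "px (px X) q = mk4 0 (r1 q) (r2 q) 0" "py (px X) q = mk4 0 (s1 q) (s2 q) 0" if q: "q \<in> M" for q
    using px_mk4[OF M q pXq hdv_const ha2[OF q] hc2[OF q] hdv_const] by simp_all
  have ppY: "py (py X) q = mk4 0 (t1 q) (t2 q) 0" if q: "q \<in> M" for q
    using px_mk4(2)[OF M q pYq hdv_const hb2[OF q] hd2[OF q] hdv_const] by simp
  show ?thesis
  proof (intro exI ballI conjI)
    fix q assume q: "q \<in> M"
    show E: "EE X q = -1 + 1 * a q * a q + 1 * c q * c q" unfolding EE_def pX[OF q] by simp
    show F: "FF X q = 1 * a q * b q + 1 * c q * d q" unfolding FF_def pX[OF q] by simp
    show G: "GG X q = 1 + 1 * b q * b q + 1 * d q * d q" unfolding GG_def pX[OF q] by simp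
    have D: "EE X q * GG X q - (FF X q)\<^sup>2 > 0" using sp q by (simp add: spacelike_on_def)
    obtain \<alpha> \<beta> where ab: "GG X q *\<^sub>R px (px X) q - (2 * FF X q) *\<^sub>R py (px X) q + EE X q *\<^sub>R py (py X) q
       = \<alpha> *\<^sub>R px X q + \<beta> *\<^sub>R py X q"
      using mc_zero[OF _ D] mn q by (auto simp: minimal_on_def)
    note ab = ab[unfolded pX[OF q] ppX[OF q] ppY[OF q]]
    have "\<alpha> = 0" using arg_cong[OF ab, of "\<lambda>v. vec_nth v 1"] by simp
    moreover have "\<beta> = 0" using arg_cong[OF ab, of "\<lambda>v. vec_nth v 4"] by simp
    ultimately have 1: "GG X q * r1 q - 2 * FF X q * s1 q + EE X q * t1 q = 0"
      and 4: "GG X q * r2 q - 2 * FF X q * s2 q + EE X q * t2 q = 0"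
      using arg_cong[OF ab, of "\<lambda>v. vec_nth v 2"] arg_cong[OF ab, of "\<lambda>v. vec_nth v 3"] by simp_all
    show "GG X q * r1 q - 2 * FF X q * s1 q + EE X q * t1 q = 0" by (rule 1)
    show "GG X q * r2 q - 2 * FF X q * s2 q + EE X q * t2 q = 0" by (rule 4)
  qed
qed


theorem theorem5p9:
  fixes M :: "(real \<times> real) set" and A B :: "real \<times> real \<Rightarrow> real"
    and X :: "real \<times> real \<Rightarrow> real^4" and z0 :: "real \<times> real"
  assumes "open M" and "connected M" and "simply_connected M"
    and "smooth_on M A" and "smooth_on M B"
    and "X = graph1 A B \<or> X = graph2 A B"
    and "spacelike_on M X" and "minimal_on M X"
    and "z0 \<in> M"
  shows "\<exists>u v :: real \<times> real \<Rightarrow> real.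
     u z0 = fst z0 \<and> v z0 = snd z0 \<and>
     (\<forall>p\<in>M.
        (u has_derivative (\<lambda>h. (1 + EE X p / WW X p) * fst h + (FF X p / WW X p) * snd h)) (at p) \<and>
        (v has_derivative (\<lambda>h. (FF X p / WW X p) * fst h + (1 + GG X p / WW X p) * snd h)) (at p)) \<and>
     (\<forall>p\<in>M.
        py u p = (FF X p / EE X p) * px u p - (WW X p / EE X p) * px v p \<and>
        py v p = (WW X p / EE X p) * px u p + (FF X p / EE X p) * px v p) \<and>
     (\<forall>p\<in>M. px u p * py v p - py u p * px v p \<noteq> 0) \<and>
     (\<exists>lam :: real \<times> real \<Rightarrow> real. \<forall>p\<in>M. lam p > 0 \<and>
        EE X p = (lam p)\<^sup>2 * ((px u p)\<^sup>2 + (px v p)\<^sup>2) \<and>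
        FF X p = (lam p)\<^sup>2 * (px u p * py u p + px v p * py v p) \<and>
        GG X p = (lam p)\<^sup>2 * ((py u p)\<^sup>2 + (py v p)\<^sup>2))"
proof -
  note M = assms(1)
  note UA = smooth_unpack[OF M assms(4)]
  note UB = smooth_unpack[OF M assms(5)]
  define a where "a = px A"
  define b where "b = py A"
  define c where "c = px B"
  define d where "d = py B"
  define r1 where "r1 = px (px A)"
  define s1 where "s1 = py (px A)"
  define t1 where "t1 = py (py A)"
  define r2 where "r2 = px (px B)"
  define s2 where "s2 = py (px B)"
  define t2 where "t2 = py (py B)"
  have ha: "\<And>q. q \<in> M \<Longrightarrow> hdv A a b q" using UA(1) unfolding a_def b_def .
  have hc: "\<And>q. q \<in> M \<Longrightarrow> hdv B c d q" using UB(1) unfolding c_def d_def .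
  have ha2: "\<And>q. q \<in> M \<Longrightarrow> hdv a r1 s1 q" using UA(2) unfolding a_def r1_def s1_def .
  have hc2: "\<And>q. q \<in> M \<Longrightarrow> hdv c r2 s2 q" using UB(2) unfolding c_def r2_def s2_def .
  have hb2: "hdv b s1 t1 q" if q: "q \<in> M" for q
    using hdv_cong[OF UA(3)[OF q]] UA(10)[OF q] unfolding b_def s1_def t1_def by simp
  have hd2: "hdv d s2 t2 q" if q: "q \<in> M" for q
    using hdv_cong[OF UB(3)[OF q]] UB(10)[OF q] unfolding d_def s2_def t2_def by simp
  have ca: "continuous_on M a" "continuous_on M b" "continuous_on M c" "continuous_on M d"
    using UA(4,5) UB(4,5) unfolding a_def b_def c_def d_def by auto
  have cr: "continuous_on M r1" "continuous_on M s1" "continuous_on M t1"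
      "continuous_on M r2" "continuous_on M s2" "continuous_on M t2"
    using UA(6,7,9) UB(6,7,9) unfolding r1_def s1_def t1_def r2_def s2_def t2_def by auto
  obtain e1 e2 sA sB where geo: "\<And>q. q \<in> M \<Longrightarrow> EE X q = e1 + sA * a q * a q + sB * c q * c q \<and>
        FF X q = sA * a q * b q + sB * c q * d q \<and> GG X q = e2 + sA * b q * b q + sB * d q * d q \<and>
        GG X q * r1 q - 2 * FF X q * s1 q + EE X q * t1 q = 0 \<and>
        GG X q * r2 q - 2 * FF X q * s2 q + EE X q * t2 q = 0"
    using graph_geo[OF M assms(6) assms(9) ha hc ha2 hb2 hc2 hd2 assms(7,8)] by blast
  define Ef where "Ef q = e1 + sA * a q * a q + sB * c q * c q" for q
  define Ff where "Ff q = sA * a q * b q + sB * c q * d q" for q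
  define Gf where "Gf q = e2 + sA * b q * b q + sB * d q * d q" for q
  define Edx where "Edx q = 2* sA * a q * r1 q + 2* sB * c q * r2 q" for q
  define Edy where "Edy q = 2* sA * a q * s1 q + 2* sB * c q * s2 q" for q
  define Fdx where "Fdx q = sA * (r1 q * b q + a q * s1 q) + sB * (r2 q * d q + c q * s2 q)" for q
  define Fdy where "Fdy q = sA * (s1 q * b q + a q * t1 q) + sB * (s2 q * d q + c q * t2 q)" for q
  define Gdx where "Gdx q = 2* sA * b q * s1 q + 2* sB * d q * s2 q" for q
  define Gdy where "Gdy q = 2* sA * b q * t1 q + 2* sB * d q * t2 q" for q
  define Df where "Df q = Ef q * Gf q - Ff q * Ff q" for q
  define Ddx where "Ddx q = Edx q * Gf q + Ef q * Gdx q - 2 * Ff q * Fdx q" for q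
  define Ddy where "Ddy q = Edy q * Gf q + Ef q * Gdy q - 2 * Ff q * Fdy q" for q
  define Wf where "Wf q = sqrt (Df q)" for q
  define Wdx where "Wdx q = Ddx q / (2 * sqrt (Df q))" for q
  define Wdy where "Wdy q = Ddy q / (2 * sqrt (Df q))" for q
  have EFG: "EE X q = Ef q" "FF X q = Ff q" "GG X q = Gf q" if "q \<in> M" for q
    using geo[OF that] unfolding Ef_def Ff_def Gf_def by auto
  have Dpos: "Df q > 0" if q: "q \<in> M" for q
    using assms(7) q EFG[OF q] unfolding spacelike_on_def Df_def by (auto simp: power2_eq_square)
  have Wpos: "Wf q > 0" if "q \<in> M" for q using Dpos[OF that] by (simp add: Wf_def)
  have WW: "WW X q = Wf q" if q: "q \<in> M" for q
    unfolding WW_def Wf_def Df_def EFG[OF q] by (simp add: power2_eq_square)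
  have hE: "hdv Ef Edx Edy q" if q: "q \<in> M" for q
    unfolding Ef_def
    by (rule hdv_cong[OF hdv_add[OF hdv_add[OF hdv_const[of e1] hdv_mult[OF hdv_mult[OF hdv_const[of sA] ha2[OF q]] ha2[OF q]]]
           hdv_mult[OF hdv_mult[OF hdv_const[of sB] hc2[OF q]] hc2[OF q]]]])
       (simp_all add: Edx_def Edy_def algebra_simps)
  have hF: "hdv Ff Fdx Fdy q" if q: "q \<in> M" for q
    unfolding Ff_def
    by (rule hdv_cong[OF hdv_add[OF hdv_mult[OF hdv_mult[OF hdv_const[of sA] ha2[OF q]] hb2[OF q]]
           hdv_mult[OF hdv_mult[OF hdv_const[of sB] hc2[OF q]] hd2[OF q]]]])
       (simp_all add: Fdx_def Fdy_def algebra_simps)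
  have hG: "hdv Gf Gdx Gdy q" if q: "q \<in> M" for q
    unfolding Gf_def
    by (rule hdv_cong[OF hdv_add[OF hdv_add[OF hdv_const[of e2] hdv_mult[OF hdv_mult[OF hdv_const[of sA] hb2[OF q]] hb2[OF q]]]
           hdv_mult[OF hdv_mult[OF hdv_const[of sB] hd2[OF q]] hd2[OF q]]]])
       (simp_all add: Gdx_def Gdy_def algebra_simps)
  have hD: "hdv Df Ddx Ddy q" if q: "q \<in> M" for q
    unfolding Df_def
    by (rule hdv_cong[OF hdv_diff[OF hdv_mult[OF hE[OF q] hG[OF q]] hdv_mult[OF hF[OF q] hF[OF q]]]])
       (simp_all add: Ddx_def Ddy_def algebra_simps)
  have hW: "hdv Wf Wdx Wdy q" if q: "q \<in> M" for q
    unfolding Wf_def Wdx_def Wdy_def by (rule hdv_sqrt[OF hD[OF q] Dpos[OF q]])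
  define P1x where "P1x q = (Edx q * Wf q - Ef q * Wdx q) / (Wf q * Wf q)" for q
  define P1y where "P1y q = (Edy q * Wf q - Ef q * Wdy q) / (Wf q * Wf q)" for q
  define Q1x where "Q1x q = (Fdx q * Wf q - Ff q * Wdx q) / (Wf q * Wf q)" for q
  define Q1y where "Q1y q = (Fdy q * Wf q - Ff q * Wdy q) / (Wf q * Wf q)" for q
  define Q2x where "Q2x q = (Gdx q * Wf q - Gf q * Wdx q) / (Wf q * Wf q)" for q
  define Q2y where "Q2y q = (Gdy q * Wf q - Gf q * Wdy q) / (Wf q * Wf q)" for q
  have hP1: "hdv (\<lambda>q. Ef q / Wf q) P1x P1y q" if q: "q \<in> M" for q
    unfolding P1x_def P1y_def using hdv_divide[OF hE[OF q] hW[OF q]] Wpos[OF q] by simp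
  have hQ1: "hdv (\<lambda>q. Ff q / Wf q) Q1x Q1y q" if q: "q \<in> M" for q
    unfolding Q1x_def Q1y_def using hdv_divide[OF hF[OF q] hW[OF q]] Wpos[OF q] by simp
  have hQ2: "hdv (\<lambda>q. Gf q / Wf q) Q2x Q2y q" if q: "q \<in> M" for q
    unfolding Q2x_def Q2y_def using hdv_divide[OF hG[OF q] hW[OF q]] Wpos[OF q] by simp
  have cE: "continuous_on M Ef" "continuous_on M Ff" "continuous_on M Gf"
    unfolding Ef_def Ff_def Gf_def using ca by (auto intro!: continuous_intros)
  have cEd: "continuous_on M Edx" "continuous_on M Edy" "continuous_on M Fdx" "continuous_on M Fdy"
      "continuous_on M Gdx" "continuous_on M Gdy"
    unfolding Edx_def Edy_def Fdx_def Fdy_def Gdx_def Gdy_def using ca cr by (auto intro!: continuous_intros)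
  have cD: "continuous_on M Df" "continuous_on M Ddx" "continuous_on M Ddy"
    unfolding Df_def Ddx_def Ddy_def using cE cEd by (auto intro!: continuous_intros)
  have cW: "continuous_on M Wf" unfolding Wf_def using cD by (auto intro!: continuous_intros)
  have Wne: "\<forall>q\<in>M. Wf q \<noteq> 0" using Wpos by force
  have Wne2: "\<forall>q\<in>M. Wf q * Wf q \<noteq> 0" using Wpos by force
  have Wne3: "\<forall>q\<in>M. 2 * Wf q \<noteq> 0" using Wpos by force
  have cWd: "continuous_on M Wdx" "continuous_on M Wdy"
    unfolding Wdx_def Wdy_def Wf_def[symmetric] using cD cW Wne3 by (auto intro!: continuous_intros)
  have cPQ: "continuous_on M P1x" "continuous_on M P1y" "continuous_on M Q1x" "continuous_on M Q1y"
     "continuous_on M Q2x" "continuous_on M Q2y"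
    unfolding P1x_def P1y_def Q1x_def Q1y_def Q2x_def Q2y_def
    using cE cEd cW cWd Wne2 by (auto intro!: continuous_intros)
  have cl1: "P1y q = Q1x q" if q: "q \<in> M" for q
  proof -
    have pde: "Gf q * r1 q - 2 * Ff q * s1 q + Ef q * t1 q = 0" "Gf q * r2 q - 2 * Ff q * s2 q + Ef q * t2 q = 0"
      using geo[OF q] EFG[OF q] by auto
    have "2 * Df q * (Edy q - Fdx q) - (Ef q * Ddy q - Ff q * Ddx q) = 2* sA * (Ff q * a q - Ef q * b q) * (Gf q * r1 q - 2 * Ff q * s1 q + Ef q * t1 q) + 2* sB * (Ff q * c q - Ef q * d q) * (Gf q * r2 q - 2 * Ff q * s2 q + Ef q * t2 q)"
      unfolding Df_def Ddx_def Ddy_def Ef_def Ff_def Gf_def Edx_def Edy_def Fdx_def Fdy_def Gdx_def Gdy_def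
      by (rule poly1(1))
    then have id: "2 * Df q * (Edy q - Fdx q) - (Ef q * Ddy q - Ff q * Ddx q) = 0" using pde by simp
    have WD: "Wf q * Wf q = Df q" using Dpos[OF q] by (simp add: Wf_def)
    show ?thesis unfolding P1y_def Q1x_def Wdx_def Wdy_def Wf_def[symmetric]
      by (rule closed_alg[OF Wpos[OF q] WD id])
  qed
  have cl2: "Q1y q = Q2x q" if q: "q \<in> M" for q
  proof -
    have pde: "Gf q * r1 q - 2 * Ff q * s1 q + Ef q * t1 q = 0" "Gf q * r2 q - 2 * Ff q * s2 q + Ef q * t2 q = 0"
      using geo[OF q] EFG[OF q] by auto
    have "2 * Df q * (Fdy q - Gdx q) - (Ff q * Ddy q - Gf q * Ddx q) = 2* sA * (a q * Gf q - Ff q * b q) * (Gf q * r1 q - 2 * Ff q * s1 q + Ef q * t1 q) + 2* sB * (c q * Gf q - Ff q * d q) * (Gf q * r2 q - 2 * Ff q * s2 q + Ef q * t2 q)"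
      unfolding Df_def Ddx_def Ddy_def Ef_def Ff_def Gf_def Edx_def Edy_def Fdx_def Fdy_def Gdx_def Gdy_def
      by (rule poly1(2))
    then have id: "2 * Df q * (Fdy q - Gdx q) - (Ff q * Ddy q - Gf q * Ddx q) = 0" using pde by simp
    have WD: "Wf q * Wf q = Df q" using Dpos[OF q] by (simp add: Wf_def)
    show ?thesis unfolding Q1y_def Q2x_def Wdx_def Wdy_def Wf_def[symmetric]
      by (rule closed_alg[OF Wpos[OF q] WD id])
  qed
  obtain \<Phi>1 where \<Phi>1: "\<forall>p\<in>M. (\<Phi>1 has_derivative (\<lambda>h. Ef p / Wf p * fst h + Ff p / Wf p * snd h)) (at p)"
    using poincare_sc[OF M assms(3), of "\<lambda>q. Ef q / Wf q" P1x P1y "\<lambda>q. Ff q / Wf q" Q1x Q1y]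
      hP1 hQ1 cPQ cl1 unfolding hdv_def by blast
  obtain \<Phi>2 where \<Phi>2: "\<forall>p\<in>M. (\<Phi>2 has_derivative (\<lambda>h. Ff p / Wf p * fst h + Gf p / Wf p * snd h)) (at p)"
    using poincare_sc[OF M assms(3), of "\<lambda>q. Ff q / Wf q" Q1x Q1y "\<lambda>q. Gf q / Wf q" Q2x Q2y]
      hQ1 hQ2 cPQ cl2 unfolding hdv_def by blast
  define u where "u q = fst q + (\<Phi>1 q - \<Phi>1 z0)" for q
  define v where "v q = snd q + (\<Phi>2 q - \<Phi>2 z0)" for q
  have du: "(u has_derivative (\<lambda>h. (1 + EE X p / WW X p) * fst h + (FF X p / WW X p) * snd h)) (at p)"
    if p: "p \<in> M" for p
  proof -
    have "(u has_derivative (\<lambda>h. fst h + (Ef p / Wf p * fst h + Ff p / Wf p * snd h - 0))) (at p)"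
      unfolding u_def by (intro has_derivative_add has_derivative_diff has_derivative_fst[OF has_derivative_ident]
          has_derivative_const \<Phi>1[rule_format, OF p])
    then show ?thesis unfolding EFG[OF p] WW[OF p] by (simp add: algebra_simps)
  qed
  have dv: "(v has_derivative (\<lambda>h. (FF X p / WW X p) * fst h + (1 + GG X p / WW X p) * snd h)) (at p)"
    if p: "p \<in> M" for p
  proof -
    have "(v has_derivative (\<lambda>h. snd h + (Ff p / Wf p * fst h + Gf p / Wf p * snd h - 0))) (at p)"
      unfolding v_def by (intro has_derivative_add has_derivative_diff has_derivative_snd[OF has_derivative_ident]
          has_derivative_const \<Phi>2[rule_format, OF p])
    then show ?thesis unfolding EFG[OF p] WW[OF p] by (simp add: algebra_simps)
  qed
  have pu: "px u p = 1 + EE X p / WW X p" "py u p = FF X p / WW X p"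
    and pv: "px v p = FF X p / WW X p" "py v p = 1 + GG X p / WW X p" if p: "p \<in> M" for p
    using px_py_eq[OF du[OF p]] px_py_eq[OF dv[OF p]] by auto
  have Epos: "EE X p > 0" and Dp: "EE X p * GG X p - (FF X p)\<^sup>2 > 0" if "p \<in> M" for p
    using assms(7) that unfolding spacelike_on_def by auto
  note fa = final_alg[OF Epos Dp WW_def pu pv]
  have H0: "u z0 = fst z0" "v z0 = snd z0" by (simp_all add: u_def v_def)
  have H1: "\<forall>p\<in>M. (u has_derivative (\<lambda>h. (1 + EE X p / WW X p) * fst h + (FF X p / WW X p) * snd h)) (at p) \<and>
        (v has_derivative (\<lambda>h. (FF X p / WW X p) * fst h + (1 + GG X p / WW X p) * snd h)) (at p)"
    using du dv by blast
  have H2: "\<forall>p\<in>M. py u p = (FF X p / EE X p) * px u p - (WW X p / EE X p) * px v p \<and>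
        py v p = (WW X p / EE X p) * px u p + (FF X p / EE X p) * px v p"
    using fa(1) by blast
  have H3: "\<forall>p\<in>M. px u p * py v p - py u p * px v p \<noteq> 0" using fa(2) by blast
  have "\<forall>p\<in>M. \<exists>l>0. EE X p = l\<^sup>2 * ((px u p)\<^sup>2 + (px v p)\<^sup>2) \<and>
        FF X p = l\<^sup>2 * (px u p * py u p + px v p * py v p) \<and> GG X p = l\<^sup>2 * ((py u p)\<^sup>2 + (py v p)\<^sup>2)"
    using fa(3) by blast
  then have H4: "\<exists>lam :: real \<times> real \<Rightarrow> real. \<forall>p\<in>M. lam p > 0 \<and>
        EE X p = (lam p)\<^sup>2 * ((px u p)\<^sup>2 + (px v p)\<^sup>2) \<and>
        FF X p = (lam p)\<^sup>2 * (px u p * py u p + px v p * py v p) \<and>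
        GG X p = (lam p)\<^sup>2 * ((py u p)\<^sup>2 + (py v p)\<^sup>2)"
    by (rule bchoice)
  show ?thesis
    apply (rule exI[where x=u], rule exI[where x=v])
    using H0 H1 H2 H3 H4 by blast
qed


end
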